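(* Consider the online multiple testing protocol described in the context, in a stationary environment in which the true states $Y_1,Y_2,\dots$ are i.i.d. $\mathrm{Bernoulli}(1-\pi)$ for a constant $\pi\in(0,1)$ (so $\mathbb{P}(Y_t=0)=\pi$). Let $\beta\in(0,1]$ and $\lambda_\beta:=G^{-1}(\beta)>0$. Suppose the algorithm maintains minimum detection power $\beta$, i.e. $G(\lambda_t)\ge\beta$, equivalently $\lambda_t\ge\lambda_\beta$, almost surely for all $t$. Then for every $T\ge1$ and all $a,b>0$, $$\mathbb{E}[\mathrm{Regret}_T(a,b)]\ \ge\ a\,\pi\,\lambda_\beta\,T=\Omega(T),$$ and moreover $$\liminf_{T\to\infty}\frac1T\,\mathrm{Regret}_T(a,b)\ \ge\ a\,\pi\,\lambda_\beta\quad\text{almost surely.}$$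
   Context: Online multiple testing protocol: at each round $t=1,2,\dots$ the environment has a true state $Y_t\in\{0,1\}$ ($0$ = null, $1$ = alternative) and reveals a $p$-value $p_t\in[0,1]$; conditionally on the states and on the past, $p_t\sim\mathrm{Uniform}[0,1]$ if $Y_t=0$ and $p_t\sim G$ if $Y_t=1$, independently of past $p$-values and decisions. Here $G:[0,1]\to[0,1]$ is a continuous, strictly increasing CDF with $G(0)=0$, $G(1)=1$. With $\mathcal{F}_{t-1}=\sigma((p_s,\lambda_s,\delta_s):s\le t-1)$, the algorithm chooses an $\mathcal{F}_{t-1}$-measurable threshold $\lambda_t\in[0,1]$ and decides $\delta_t=\mathbf{1}\{p_t\le\lambda_t\}$ (reject iff $\delta_t=1$). Define false positives $V_T=\sum_{t=1}^T\mathbf{1}\{Y_t=0,\delta_t=1\}$, false negatives $M_T=\sum_{t=1}^T\mathbf{1}\{Y_t=1,\delta_t=0\}$, and for weights $a,b>0$ the Weighted Regret $\mathrm{Regret}_T(a,b)=a V_T+b M_T$. *)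

theory Defs
  imports "HOL-Probability.Probability"
begin

text \<open>Rounds are indexed from 0: round t of the paper is index t-1 here.
  Sigma algebra on the sample space generated by a family of real random variables.\<close>
definition gen_sigma :: "'a measure \<Rightarrow> ('a \<Rightarrow> real) set \<Rightarrow> 'a measure" where
  "gen_sigma M Fs = sigma (space M) {f -` B \<inter> space M | f B. f \<in> Fs \<and> B \<in> sets borel}"

definition rejects :: "(nat \<Rightarrow> 'a \<Rightarrow> real) \<Rightarrow> (nat \<Rightarrow> 'a \<Rightarrow> real) \<Rightarrow> nat \<Rightarrow> 'a \<Rightarrow> bool" where
  "rejects p lam t \<omega> \<longleftrightarrow> p t \<omega> \<le> lam t \<omega>"

definition past_vars :: "(nat \<Rightarrow> 'a \<Rightarrow> real) \<Rightarrow> (nat \<Rightarrow> 'a \<Rightarrow> real) \<Rightarrow> nat \<Rightarrow> ('a \<Rightarrow> real) set" where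
  "past_vars p lam t = {p s | s. s < t} \<union> {lam s | s. s < t}
      \<union> {(\<lambda>\<omega>. of_bool (rejects p lam s \<omega>)) | s. s < t}"

text \<open>The filtration F_{t-1}: information available before round t.\<close>
definition past_filtration :: "'a measure \<Rightarrow> (nat \<Rightarrow> 'a \<Rightarrow> real) \<Rightarrow> (nat \<Rightarrow> 'a \<Rightarrow> real) \<Rightarrow> nat \<Rightarrow> 'a measure" where
  "past_filtration M p lam t = gen_sigma M (past_vars p lam t)"

definition cond_sigma :: "'a measure \<Rightarrow> (nat \<Rightarrow> 'a \<Rightarrow> nat) \<Rightarrow> (nat \<Rightarrow> 'a \<Rightarrow> real) \<Rightarrow> (nat \<Rightarrow> 'a \<Rightarrow> real) \<Rightarrow> nat \<Rightarrow> 'a measure" where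
  "cond_sigma M Y p lam t = gen_sigma M ({(\<lambda>\<omega>. real (Y s \<omega>)) | s. True} \<union> past_vars p lam t)"

definition false_pos :: "(nat \<Rightarrow> 'a \<Rightarrow> nat) \<Rightarrow> (nat \<Rightarrow> 'a \<Rightarrow> real) \<Rightarrow> (nat \<Rightarrow> 'a \<Rightarrow> real) \<Rightarrow> nat \<Rightarrow> 'a \<Rightarrow> nat" where
  "false_pos Y p lam T \<omega> = card {t. t < T \<and> Y t \<omega> = 0 \<and> rejects p lam t \<omega>}"

definition false_neg :: "(nat \<Rightarrow> 'a \<Rightarrow> nat) \<Rightarrow> (nat \<Rightarrow> 'a \<Rightarrow> real) \<Rightarrow> (nat \<Rightarrow> 'a \<Rightarrow> real) \<Rightarrow> nat \<Rightarrow> 'a \<Rightarrow> nat" where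
  "false_neg Y p lam T \<omega> = card {t. t < T \<and> Y t \<omega> = 1 \<and> \<not> rejects p lam t \<omega>}"

definition weighted_regret :: "real \<Rightarrow> real \<Rightarrow> (nat \<Rightarrow> 'a \<Rightarrow> nat) \<Rightarrow> (nat \<Rightarrow> 'a \<Rightarrow> real) \<Rightarrow> (nat \<Rightarrow> 'a \<Rightarrow> real) \<Rightarrow> nat \<Rightarrow> 'a \<Rightarrow> real" where
  "weighted_regret a b Y p lam T \<omega> = a * real (false_pos Y p lam T \<omega>) + b * real (false_neg Y p lam T \<omega>)"

end

theory Submission imports Defs "HOL-Library.Discrete_Functions" begin

lemma diff_bound_iter:
  fixes s :: "nat \<Rightarrow> real"
  assumes "\<And>n. \<bar>s (Suc n) - s n\<bar> \<le> 1"
  shows "\<bar>s (m + d) - s m\<bar> \<le> real d"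
proof (induction d)
  case 0 then show ?case by simp
next
  case (Suc d)
  have "\<bar>s (Suc (m + d)) - s (m + d)\<bar> \<le> 1" by (rule assms)
  with Suc show ?case by simp
qed

lemma det_slln:
  fixes s :: "nat \<Rightarrow> real"
  assumes inc: "\<And>n. \<bar>s (Suc n) - s n\<bar> \<le> 1"
    and lim: "(\<lambda>k. s (k^2) / real (k^2)) \<longlonglongrightarrow> 0"
  shows "(\<lambda>n. s n / real n) \<longlonglongrightarrow> 0"
proof (rule Lim_null_comparison)
  let ?k = "\<lambda>n. floor_sqrt n"
  have fl: "filterlim ?k at_top sequentially"
    unfolding filterlim_at_top
  proof
    fix c :: nat
    show "eventually (\<lambda>n. c \<le> ?k n) sequentially"
      using eventually_ge_at_top[of "c^2"] by eventually_elim (rule le_floor_sqrtI)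
  qed
  have l1: "(\<lambda>n. \<bar>s (?k n ^2) / real (?k n ^2)\<bar>) \<longlonglongrightarrow> 0"
    using tendsto_rabs[OF filterlim_compose[OF lim fl]] by simp
  have l2: "(\<lambda>n. 2 / real (?k n)) \<longlonglongrightarrow> 0"
    using filterlim_compose[OF lim_const_over_n[of "2::real"] fl] by simp
  show "(\<lambda>n. \<bar>s (?k n ^2) / real (?k n ^2)\<bar> + 2 / real (?k n)) \<longlonglongrightarrow> 0"
    using tendsto_add[OF l1 l2] by simp
  show "\<forall>\<^sub>F n in sequentially. norm (s n / real n) \<le> \<bar>s (?k n ^2) / real (?k n ^2)\<bar> + 2 / real (?k n)"
    using eventually_ge_at_top[of "1::nat"]
  proof eventually_elim
    case (elim n)
    define k where "k = ?k n"
    have kpos: "k \<ge> 1" using elim by (simp add: k_def Suc_le_eq)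
    have k2: "k^2 \<le> n" by (simp add: k_def)
    have k3: "n < (Suc k)^2" unfolding k_def by (rule Suc_floor_sqrt_power2_gt)
    have d: "n - k^2 \<le> 2 * k" using k3 by (simp add: power2_eq_square)
    have "\<bar>s (k^2 + (n - k^2)) - s (k^2)\<bar> \<le> real (n - k^2)" by (rule diff_bound_iter[of s, OF inc])
    moreover have "k^2 + (n - k^2) = n" using k2 by simp
    moreover have "real (n - k^2) \<le> 2 * real k" using d
      by (metis of_nat_le_iff of_nat_mult of_nat_numeral)
    ultimately have e: "\<bar>s n - s (k^2)\<bar> \<le> 2 * real k" by simp
    have kk: "real (k^2) > 0" using kpos by simp
    have f1: "\<bar>s n\<bar> \<le> \<bar>s (k^2)\<bar> + 2 * real k" using e by linarith
    have f2: "\<bar>s n / real n\<bar> \<le> \<bar>s n\<bar> / real (k^2)"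
    proof -
      have "\<bar>s n / real n\<bar> = \<bar>s n\<bar> / real n" by simp
      also have "\<dots> \<le> \<bar>s n\<bar> / real (k^2)"
      proof (rule divide_left_mono)
        show "real (k^2) \<le> real n" using k2 by linarith
        show "0 < real n * real (k^2)" using kk elim by simp
      qed simp
      finally show ?thesis .
    qed
    have f3: "\<bar>s n\<bar> / real (k^2) \<le> (\<bar>s (k^2)\<bar> + 2 * real k) / real (k^2)"
      by (rule divide_right_mono[OF f1]) (use kk in linarith)
    have f4: "(\<bar>s (k^2)\<bar> + 2 * real k) / real (k^2) = \<bar>s (k^2) / real (k^2)\<bar> + 2 / real k"
    proof -
      have kr: "real k > 0" using kpos by simp
      have "real (k^2) = real k * real k" by (simp add: power2_eq_square)
      hence "2 * real k / real (k^2) = 2 / real k" using kr by simp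
      moreover have "\<bar>s (k^2)\<bar> / real (k^2) = \<bar>s (k^2) / real (k^2)\<bar>" by simp
      ultimately show ?thesis by (simp add: add_divide_distrib)
    qed
    have "\<bar>s n / real n\<bar> \<le> \<bar>s (k^2) / real (k^2)\<bar> + 2 / real k"
      using f2 f3 f4 by linarith
    then show ?case unfolding k_def by simp
  qed
qed

lemma aux_frac: "(r::real) > 0 \<Longrightarrow> e > 0 \<Longrightarrow> r / (e*r)^2 = 1/e^2 * inverse r"
  by (simp add: power2_eq_square field_simps)

lemma (in prob_space) orth_slln:
  fixes X :: "nat \<Rightarrow> 'a \<Rightarrow> real"
  assumes meas[measurable]: "\<And>t. X t \<in> borel_measurable M"
    and bnd: "\<And>t \<omega>. \<omega> \<in> space M \<Longrightarrow> \<bar>X t \<omega>\<bar> \<le> 1"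
    and orth: "\<And>i l. i < l \<Longrightarrow> expectation (\<lambda>\<omega>. X l \<omega> * X i \<omega>) = 0"
  shows "AE \<omega> in M. (\<lambda>n. (\<Sum>t<n. X t \<omega>) / real n) \<longlonglongrightarrow> 0"
proof -
  define S where "S n \<omega> = (\<Sum>t<n. X t \<omega>)" for n \<omega>
  have Smeas[measurable]: "S n \<in> borel_measurable M" for n unfolding S_def by measurable
  have Sbnd: "\<bar>S n \<omega>\<bar> \<le> real n" if "\<omega> \<in> space M" for n \<omega>
  proof (induction n)
    case 0 then show ?case by (simp add: S_def)
  next
    case (Suc n)
    have "S (Suc n) \<omega> = S n \<omega> + X n \<omega>" by (simp add: S_def)
    moreover have "\<bar>S n \<omega> + X n \<omega>\<bar> \<le> \<bar>S n \<omega>\<bar> + \<bar>X n \<omega>\<bar>" by (rule abs_triangle_ineq)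
    ultimately show ?case using Suc bnd[OF that, of n] by simp
  qed
  have intS2: "integrable M (\<lambda>\<omega>. (S n \<omega>)^2)" for n
  proof (rule integrable_const_bound[where B="real n ^ 2"])
    show "AE \<omega> in M. norm ((S n \<omega>)^2) \<le> real n ^ 2"
    proof (rule AE_I2)
      fix \<omega> assume "\<omega> \<in> space M"
      then have "\<bar>S n \<omega>\<bar>^2 \<le> real n ^ 2" by (intro power_mono Sbnd) auto
      then show "norm ((S n \<omega>)^2) \<le> real n ^ 2" by simp
    qed
  qed simp
  have intXX: "integrable M (\<lambda>\<omega>. X l \<omega> * X i \<omega>)" for l i
  proof (rule integrable_const_bound[where B=1])
    show "AE \<omega> in M. norm (X l \<omega> * X i \<omega>) \<le> 1"
      using bnd by (auto simp: abs_mult intro!: mult_le_one)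
  qed simp
  have ES2: "expectation (\<lambda>\<omega>. (S n \<omega>)^2) \<le> real n" for n
  proof (induction n)
    case 0 then show ?case by (simp add: S_def)
  next
    case (Suc n)
    have eq: "(S (Suc n) \<omega>)^2 = (S n \<omega>)^2 + 2 * (\<Sum>i<n. X n \<omega> * X i \<omega>) + X n \<omega> * X n \<omega>" for \<omega>
    proof -
      have a: "S (Suc n) \<omega> = S n \<omega> + X n \<omega>" by (simp add: S_def)
      have b: "X n \<omega> * S n \<omega> = (\<Sum>i<n. X n \<omega> * X i \<omega>)" by (simp add: S_def sum_distrib_left)
      have "(S n \<omega> + X n \<omega>)^2 = (S n \<omega>)^2 + 2 * (X n \<omega> * S n \<omega>) + X n \<omega> * X n \<omega>"
        by (simp add: power2_eq_square ring_distribs)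
      then show ?thesis using a b by simp
    qed
    have i1: "integrable M (\<lambda>\<omega>. 2 * (\<Sum>i<n. X n \<omega> * X i \<omega>))"
      by (intro integrable_mult_right Bochner_Integration.integrable_sum intXX)
    have e1: "expectation (\<lambda>\<omega>. 2 * (\<Sum>i<n. X n \<omega> * X i \<omega>)) = 0"
      using intXX orth by (simp add: Bochner_Integration.integral_sum)
    have e2: "expectation (\<lambda>\<omega>. X n \<omega> * X n \<omega>) \<le> 1"
    proof -
      have "expectation (\<lambda>\<omega>. X n \<omega> * X n \<omega>) \<le> expectation (\<lambda>\<omega>. 1)"
      proof (rule integral_mono[OF intXX])
        fix \<omega> assume "\<omega> \<in> space M"
        then have h: "\<bar>X n \<omega>\<bar> \<le> 1" by (rule bnd)
        have "\<bar>X n \<omega>\<bar> * \<bar>X n \<omega>\<bar> \<le> 1" by (rule mult_le_one[OF h abs_ge_zero h])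
        then show "X n \<omega> * X n \<omega> \<le> 1" by (simp add: abs_mult_self_eq)
      qed simp
      then show ?thesis by (simp add: prob_space)
    qed
    have "expectation (\<lambda>\<omega>. (S (Suc n) \<omega>)^2) = expectation (\<lambda>\<omega>. (S n \<omega>)^2)
        + expectation (\<lambda>\<omega>. 2 * (\<Sum>i<n. X n \<omega> * X i \<omega>)) + expectation (\<lambda>\<omega>. X n \<omega> * X n \<omega>)"
      unfolding eq using intS2 i1 intXX by simp
    with Suc e1 e2 show ?case by simp
  qed
  have key: "AE \<omega> in M. eventually (\<lambda>k. \<bar>S ((Suc k)^2) \<omega>\<bar> < e * real ((Suc k)^2)) sequentially"
    if e: "e > 0" for e
  proof -
    define A where "A k = {\<omega> \<in> space M. e * real ((Suc k)^2) \<le> \<bar>S ((Suc k)^2) \<omega>\<bar>}" for k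
    have Ameas: "A k \<in> sets M" for k unfolding A_def by measurable
    have Abnd: "measure M (A k) \<le> 1 / e^2 * inverse (real (Suc k) ^ 2)" for k
    proof -
      have pos: "e * real ((Suc k)^2) > 0" using e by simp
      have "measure M (A k) \<le> expectation (\<lambda>\<omega>. (S ((Suc k)^2) \<omega>)^2) / (e * real ((Suc k)^2))^2"
        unfolding A_def by (rule second_moment_method[OF Smeas intS2 pos])
      also have "\<dots> \<le> real ((Suc k)^2) / (e * real ((Suc k)^2))^2"
        by (intro divide_right_mono ES2) simp
      also have "\<dots> = 1 / e^2 * inverse (real (Suc k) ^ 2)"
        using aux_frac[OF _ e, of "real (Suc k) ^ 2"] by simp
      finally show ?thesis .
    qed
    have s0: "summable (\<lambda>n. inverse (real n ^ 2))"
      by (rule inverse_power_summable) simp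
    have sum1: "summable (\<lambda>k. inverse (real (Suc k) ^ 2))"
      using s0 by (subst summable_Suc_iff)
    have sum2: "summable (\<lambda>k. measure M (A k))"
    proof (rule summable_comparison_test[OF _ summable_mult[OF sum1, of "1/e^2"]])
      have "norm (measure M (A k)) \<le> 1 / e^2 * inverse (real (Suc k) ^ 2)" for k
        using Abnd[of k] by simp
      then show "\<exists>N. \<forall>n\<ge>N. norm (measure M (A n)) \<le> 1 / e^2 * inverse (real (Suc n) ^ 2)"
        by blast
    qed
    have fin: "emeasure M (A k) < \<infinity>" for k
      by (simp add: emeasure_eq_measure)
    have ae: "AE \<omega> in M. eventually (\<lambda>k. \<omega> \<in> space M - A k) sequentially"
      by (rule borel_cantelli_AE1[OF Ameas fin sum2])
    show ?thesis
    proof (rule eventually_mono[OF ae])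
      fix \<omega> assume "eventually (\<lambda>k. \<omega> \<in> space M - A k) sequentially"
      then show "eventually (\<lambda>k. \<bar>S ((Suc k)^2) \<omega>\<bar> < e * real ((Suc k)^2)) sequentially"
      proof (rule eventually_mono)
        fix k assume "\<omega> \<in> space M - A k"
        then show "\<bar>S ((Suc k)^2) \<omega>\<bar> < e * real ((Suc k)^2)" unfolding A_def by auto
      qed
    qed
  qed
  have "AE \<omega> in M. \<forall>m. eventually (\<lambda>k. \<bar>S ((Suc k)^2) \<omega>\<bar> < inverse (real (Suc m)) * real ((Suc k)^2)) sequentially"
    unfolding AE_all_countable using key by simp
  then show ?thesis
  proof (rule AE_mp, intro AE_I2 impI)
    fix \<omega> assume \<omega>: "\<omega> \<in> space M"
      and ev: "\<forall>m. eventually (\<lambda>k. \<bar>S ((Suc k)^2) \<omega>\<bar> < inverse (real (Suc m)) * real ((Suc k)^2)) sequentially"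
    have "(\<lambda>k. S ((Suc k)^2) \<omega> / real ((Suc k)^2)) \<longlonglongrightarrow> 0"
      unfolding LIMSEQ_iff
    proof (intro allI impI)
      fix r :: real assume "r > 0"
      then obtain m where m: "inverse (real (Suc m)) < r" using reals_Archimedean[of r] by blast
      from ev[rule_format, of m] obtain N where N: "\<And>k. k \<ge> N \<Longrightarrow> \<bar>S ((Suc k)^2) \<omega>\<bar> < inverse (real (Suc m)) * real ((Suc k)^2)"
        unfolding eventually_sequentially by blast
      have "norm (S ((Suc k)^2) \<omega> / real ((Suc k)^2) - 0) < r" if "k \<ge> N" for k
      proof -
        have p: "real ((Suc k)^2) > 0" by simp
        have "norm (S ((Suc k)^2) \<omega> / real ((Suc k)^2) - 0) = \<bar>S ((Suc k)^2) \<omega>\<bar> / real ((Suc k)^2)"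
          by simp
        also have "\<dots> < inverse (real (Suc m))"
          using N[OF that] p by (simp add: divide_less_eq)
        finally show ?thesis using m by linarith
      qed
      then show "\<exists>N. \<forall>k\<ge>N. norm (S ((Suc k)^2) \<omega> / real ((Suc k)^2) - 0) < r" by blast
    qed
    then have "(\<lambda>k. S (k^2) \<omega> / real (k^2)) \<longlonglongrightarrow> 0"
      by (rule LIMSEQ_imp_Suc)
    moreover have "\<bar>S (Suc n) \<omega> - S n \<omega>\<bar> \<le> 1" for n
      using bnd[OF \<omega>, of n] by (simp add: S_def)
    ultimately have "(\<lambda>n. S n \<omega> / real n) \<longlonglongrightarrow> 0"
      using det_slln[of "\<lambda>n. S n \<omega>"] by blast
    then show "(\<lambda>n. (\<Sum>t<n. X t \<omega>) / real n) \<longlonglongrightarrow> 0" by (simp add: S_def)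
  qed
qed


lemma gen_sigma_gen_Pow: "{f -` B \<inter> space M | f B. f \<in> Fs \<and> B \<in> sets borel} \<subseteq> Pow (space M)"
  by auto

lemma gen_sigma_space[simp]: "space (gen_sigma M Fs) = space M"
  unfolding gen_sigma_def by (rule space_measure_of[OF gen_sigma_gen_Pow])

lemma gen_sigma_sets: "sets (gen_sigma M Fs) = sigma_sets (space M) {f -` B \<inter> space M | f B. f \<in> Fs \<and> B \<in> sets borel}"
  unfolding gen_sigma_def by (rule sets_measure_of[OF gen_sigma_gen_Pow])

lemma gen_sigma_basic: "f \<in> Fs \<Longrightarrow> B \<in> sets borel \<Longrightarrow> f -` B \<inter> space M \<in> sets (gen_sigma M Fs)"
  unfolding gen_sigma_sets by (rule sigma_sets.Basic) blast

lemma gen_sigma_sub: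
  assumes "\<And>f. f \<in> Fs \<Longrightarrow> f \<in> borel_measurable M"
  shows "sets (gen_sigma M Fs) \<subseteq> sets M"
  unfolding gen_sigma_sets
proof (rule sets.sigma_sets_subset)
  show "{f -` B \<inter> space M | f B. f \<in> Fs \<and> B \<in> sets borel} \<subseteq> sets M"
    using assms measurable_sets by blast
qed

lemma lam_measurable:
  assumes p_meas: "\<And>t. p t \<in> borel_measurable M"
    and lam_meas: "\<And>t. lam t \<in> borel_measurable (past_filtration M p lam t)"
  shows "lam t \<in> borel_measurable M"
proof (induction t rule: less_induct)
  case (less t)
  have "f \<in> borel_measurable M" if "f \<in> past_vars p lam t" for f
  proof -
    from that consider (a) s where "s < t" "f = p s" | (b) s where "s < t" "f = lam s"
      | (c) s where "s < t" "f = (\<lambda>\<omega>. of_bool (rejects p lam s \<omega>))"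
      unfolding past_vars_def by blast
    then show ?thesis
    proof cases
      case a then show ?thesis using p_meas by simp
    next
      case b then show ?thesis using less by simp
    next
      case c
      have [measurable]: "p s \<in> borel_measurable M" "lam s \<in> borel_measurable M"
        using p_meas less c by auto
      show ?thesis unfolding c rejects_def by measurable
    qed
  qed
  then have sub: "sets (past_filtration M p lam t) \<subseteq> sets M"
    unfolding past_filtration_def by (rule gen_sigma_sub)
  have "measurable (past_filtration M p lam t) (borel :: real measure) \<subseteq> measurable M borel"
    by (rule measurable_mono) (use sub in \<open>auto simp: past_filtration_def\<close>)
  then show ?case using lam_meas[of t] by blast
qed

theorem theorem1:
  fixes M :: "'a measure"
    and Y :: "nat \<Rightarrow> 'a \<Rightarrow> nat"
    and p lam :: "nat \<Rightarrow> 'a \<Rightarrow> real"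
    and G :: "real \<Rightarrow> real"
    and \<pi> \<beta> lb a b :: real
  assumes M: "prob_space M"
    and G_cont: "continuous_on {0..1} G"
    and G_mono: "strict_mono_on {0..1} G"
    and G0: "G 0 = 0" and G1: "G 1 = 1"
    and pi: "0 < \<pi>" "\<pi> < 1"
    and Y_meas: "\<And>t. Y t \<in> measurable M (count_space UNIV)"
    and Y_vals: "\<And>t \<omega>. \<omega> \<in> space M \<Longrightarrow> Y t \<omega> \<in> {0, 1}"
    and Y_indep: "prob_space.indep_vars M (\<lambda>_. count_space UNIV) Y UNIV"
    and Y_null: "\<And>t. measure M {\<omega> \<in> space M. Y t \<omega> = 0} = \<pi>"
    and p_meas: "\<And>t. p t \<in> borel_measurable M"
    and p_vals: "\<And>t \<omega>. \<omega> \<in> space M \<Longrightarrow> p t \<omega> \<in> {0..1}"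
    and p_null: "\<And>t A x. A \<in> sets (cond_sigma M Y p lam t) \<Longrightarrow> 0 \<le> x \<Longrightarrow> x \<le> 1 \<Longrightarrow>
        measure M ({\<omega> \<in> space M. p t \<omega> \<le> x} \<inter> A \<inter> {\<omega> \<in> space M. Y t \<omega> = 0})
          = x * measure M (A \<inter> {\<omega> \<in> space M. Y t \<omega> = 0})"
    and p_alt: "\<And>t A x. A \<in> sets (cond_sigma M Y p lam t) \<Longrightarrow> 0 \<le> x \<Longrightarrow> x \<le> 1 \<Longrightarrow>
        measure M ({\<omega> \<in> space M. p t \<omega> \<le> x} \<inter> A \<inter> {\<omega> \<in> space M. Y t \<omega> = 1})
          = G x * measure M (A \<inter> {\<omega> \<in> space M. Y t \<omega> = 1})"
    and lam_meas: "\<And>t. lam t \<in> borel_measurable (past_filtration M p lam t)"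
    and lam_vals: "\<And>t \<omega>. \<omega> \<in> space M \<Longrightarrow> lam t \<omega> \<in> {0..1}"
    and beta: "0 < \<beta>" "\<beta> \<le> 1"
    and lb: "lb \<in> {0..1}" "G lb = \<beta>"
    and power: "\<And>t. AE \<omega> in M. G (lam t \<omega>) \<ge> \<beta>"
    and ab: "0 < a" "0 < b"
  shows "(\<forall>T\<ge>1. (\<integral>\<omega>. weighted_regret a b Y p lam T \<omega> \<partial>M) \<ge> a * \<pi> * lb * real T)
    \<and> (AE \<omega> in M. Liminf sequentially (\<lambda>T. ereal (weighted_regret a b Y p lam T \<omega> / real T))
                    \<ge> ereal (a * \<pi> * lb))"
proof -
  interpret prob_space M by (rule M)
  note [measurable] = Y_meas p_meas
  have lamM[measurable]: "lam t \<in> borel_measurable M" for t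
    by (rule lam_measurable[OF p_meas lam_meas])
  have lb01: "0 \<le> lb" "lb \<le> 1" using lb(1) by auto
  have lam_ge: "AE \<omega> in M. \<forall>t. lb \<le> lam t \<omega>"
    unfolding AE_all_countable
  proof
    fix t
    show "AE \<omega> in M. lb \<le> lam t \<omega>"
      using power[of t]
    proof (rule AE_mp, intro AE_I2 impI)
      fix \<omega> assume \<omega>: "\<omega> \<in> space M" and g: "\<beta> \<le> G (lam t \<omega>)"
      show "lb \<le> lam t \<omega>"
      proof (rule ccontr)
        assume "\<not> lb \<le> lam t \<omega>"
        then have "lam t \<omega> < lb" by simp
        then have "G (lam t \<omega>) < G lb"
          using strict_mono_onD[OF G_mono] lam_vals[OF \<omega>] lb(1) by blast
        with g lb(2) show False by simp
      qed
    qed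
  qed
  have fp_sum: "real (false_pos Y p lam T \<omega>) = (\<Sum>t<T. of_bool (Y t \<omega> = 0 \<and> rejects p lam t \<omega>))" for T \<omega>
  proof -
    have "{t. t < T \<and> Y t \<omega> = 0 \<and> rejects p lam t \<omega>} = {..<T} \<inter> {t. Y t \<omega> = 0 \<and> rejects p lam t \<omega>}" by auto
    then show ?thesis unfolding false_pos_def by simp
  qed
  have fn_sum: "real (false_neg Y p lam T \<omega>) = (\<Sum>t<T. of_bool (Y t \<omega> = 1 \<and> \<not> rejects p lam t \<omega>))" for T \<omega>
  proof -
    have "{t. t < T \<and> Y t \<omega> = 1 \<and> \<not> rejects p lam t \<omega>} = {..<T} \<inter> {t. Y t \<omega> = 1 \<and> \<not> rejects p lam t \<omega>}" by auto
    then show ?thesis unfolding false_neg_def by simp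
  qed
  have reg_eq: "weighted_regret a b Y p lam T = (\<lambda>\<omega>. a * (\<Sum>t<T. of_bool (Y t \<omega> = 0 \<and> p t \<omega> \<le> lam t \<omega>))
      + b * (\<Sum>t<T. of_bool (Y t \<omega> = 1 \<and> \<not> p t \<omega> \<le> lam t \<omega>)))" for T
    by (rule ext) (simp add: weighted_regret_def fp_sum fn_sum rejects_def)
  have reg_meas: "weighted_regret a b Y p lam T \<in> borel_measurable M" for T
    unfolding reg_eq by measurable
  have Zs: "{\<omega> \<in> space M. Y t \<omega> = 0 \<and> p t \<omega> \<le> lb} \<in> sets M" for t by measurable
  have reg_ge: "a * (\<Sum>t<T. of_bool (Y t \<omega> = 0 \<and> p t \<omega> \<le> lb)) \<le> weighted_regret a b Y p lam T \<omega>"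
    if "\<forall>t. lb \<le> lam t \<omega>" for T \<omega>
  proof -
    have "(\<Sum>t<T. of_bool (Y t \<omega> = 0 \<and> p t \<omega> \<le> lb)) \<le> (\<Sum>t<T. (of_bool (Y t \<omega> = 0 \<and> p t \<omega> \<le> lam t \<omega>)::real))"
      by (intro sum_mono) (use that in \<open>auto intro: order_trans\<close>)
    then have h1: "a * (\<Sum>t<T. of_bool (Y t \<omega> = 0 \<and> p t \<omega> \<le> lb)) \<le> a * (\<Sum>t<T. (of_bool (Y t \<omega> = 0 \<and> p t \<omega> \<le> lam t \<omega>)::real))"
      using ab by (intro mult_left_mono) auto
    have h2: "0 \<le> b * (\<Sum>t<T. (of_bool (Y t \<omega> = 1 \<and> \<not> p t \<omega> \<le> lam t \<omega>)::real))"
      using ab by (intro mult_nonneg_nonneg sum_nonneg) auto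
    have h3: "weighted_regret a b Y p lam T \<omega> = a * (\<Sum>t<T. (of_bool (Y t \<omega> = 0 \<and> p t \<omega> \<le> lam t \<omega>)::real))
      + b * (\<Sum>t<T. (of_bool (Y t \<omega> = 1 \<and> \<not> p t \<omega> \<le> lam t \<omega>)::real))"
      by (simp only: reg_eq)
    show ?thesis using h1 h2 h3 by linarith
  qed
  have measZ: "measure M {\<omega> \<in> space M. Y t \<omega> = 0 \<and> p t \<omega> \<le> lb} = lb * \<pi>" for t
  proof -
    have top: "space M \<in> sets (cond_sigma M Y p lam t)"
      unfolding cond_sigma_def by (metis gen_sigma_space sets.top)
    have "{\<omega> \<in> space M. Y t \<omega> = 0 \<and> p t \<omega> \<le> lb} = {\<omega> \<in> space M. p t \<omega> \<le> lb} \<inter> space M \<inter> {\<omega> \<in> space M. Y t \<omega> = 0}"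
      by auto
    also have "measure M \<dots> = lb * measure M (space M \<inter> {\<omega> \<in> space M. Y t \<omega> = 0})"
      by (rule p_null[OF top lb01])
    also have "space M \<inter> {\<omega> \<in> space M. Y t \<omega> = 0} = {\<omega> \<in> space M. Y t \<omega> = 0}" by auto
    finally show ?thesis using Y_null[of t] by simp
  qed
  have part1: "\<forall>T\<ge>1. (\<integral>\<omega>. weighted_regret a b Y p lam T \<omega> \<partial>M) \<ge> a * \<pi> * lb * real T"
  proof (intro allI impI)
    fix T :: nat assume "T \<ge> 1"
    have int1: "integrable M (\<lambda>\<omega>. a * (\<Sum>t<T. indicator {\<omega> \<in> space M. Y t \<omega> = 0 \<and> p t \<omega> \<le> lb} \<omega>))"
      using Zs by (intro integrable_mult_right Bochner_Integration.integrable_sum integrable_indicator) (auto simp: emeasure_eq_measure)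
    have int2: "integrable M (weighted_regret a b Y p lam T)"
    proof (rule integrable_const_bound[where B="a * real T + b * real T"])
      show "AE \<omega> in M. norm (weighted_regret a b Y p lam T \<omega>) \<le> a * real T + b * real T"
      proof (rule AE_I2)
        fix \<omega>
        have c1: "(\<Sum>t<T. (of_bool (Y t \<omega> = 0 \<and> p t \<omega> \<le> lam t \<omega>)::real)) \<le> real T"
          using sum_mono[of "{..<T}" "\<lambda>t. (of_bool (Y t \<omega> = 0 \<and> p t \<omega> \<le> lam t \<omega>)::real)" "\<lambda>_. 1"] by simp
        have c2: "(\<Sum>t<T. (of_bool (Y t \<omega> = 1 \<and> \<not> p t \<omega> \<le> lam t \<omega>)::real)) \<le> real T"
          using sum_mono[of "{..<T}" "\<lambda>t. (of_bool (Y t \<omega> = 1 \<and> \<not> p t \<omega> \<le> lam t \<omega>)::real)" "\<lambda>_. 1"] by simp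
        have n1: "0 \<le> (\<Sum>t<T. (of_bool (Y t \<omega> = 0 \<and> p t \<omega> \<le> lam t \<omega>)::real))" by (intro sum_nonneg) auto
        have n2: "0 \<le> (\<Sum>t<T. (of_bool (Y t \<omega> = 1 \<and> \<not> p t \<omega> \<le> lam t \<omega>)::real))" by (intro sum_nonneg) auto
        have "a * (\<Sum>t<T. (of_bool (Y t \<omega> = 0 \<and> p t \<omega> \<le> lam t \<omega>)::real)) \<le> a * real T"
          using c1 ab by (intro mult_left_mono) auto
        moreover have "b * (\<Sum>t<T. (of_bool (Y t \<omega> = 1 \<and> \<not> p t \<omega> \<le> lam t \<omega>)::real)) \<le> b * real T"
          using c2 ab by (intro mult_left_mono) auto
        moreover have "0 \<le> a * (\<Sum>t<T. (of_bool (Y t \<omega> = 0 \<and> p t \<omega> \<le> lam t \<omega>)::real))"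
          using n1 ab by simp
        moreover have "0 \<le> b * (\<Sum>t<T. (of_bool (Y t \<omega> = 1 \<and> \<not> p t \<omega> \<le> lam t \<omega>)::real))"
          using n2 ab by simp
        ultimately show "norm (weighted_regret a b Y p lam T \<omega>) \<le> a * real T + b * real T"
          unfolding reg_eq by simp
      qed
    qed (rule reg_meas)
    have "(\<integral>\<omega>. a * (\<Sum>t<T. indicator {\<omega> \<in> space M. Y t \<omega> = 0 \<and> p t \<omega> \<le> lb} \<omega>) \<partial>M)
        \<le> (\<integral>\<omega>. weighted_regret a b Y p lam T \<omega> \<partial>M)"
    proof (rule integral_mono_AE[OF int1 int2])
      show "AE \<omega> in M. a * (\<Sum>t<T. indicator {\<omega> \<in> space M. Y t \<omega> = 0 \<and> p t \<omega> \<le> lb} \<omega>) \<le> weighted_regret a b Y p lam T \<omega>"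
        using lam_ge
      proof (rule AE_mp, intro AE_I2 impI)
        fix \<omega> assume \<omega>: "\<omega> \<in> space M" and l: "\<forall>t. lb \<le> lam t \<omega>"
        have "(\<Sum>t<T. indicator {\<omega> \<in> space M. Y t \<omega> = 0 \<and> p t \<omega> \<le> lb} \<omega>) = (\<Sum>t<T. (of_bool (Y t \<omega> = 0 \<and> p t \<omega> \<le> lb)::real))"
          using \<omega> by (intro sum.cong) (auto simp: indicator_def)
        then show "a * (\<Sum>t<T. indicator {\<omega> \<in> space M. Y t \<omega> = 0 \<and> p t \<omega> \<le> lb} \<omega>) \<le> weighted_regret a b Y p lam T \<omega>"
          using reg_ge[OF l, of T] by simp
      qed
    qed
    also have "(\<integral>\<omega>. a * (\<Sum>t<T. indicator {\<omega> \<in> space M. Y t \<omega> = 0 \<and> p t \<omega> \<le> lb} \<omega>) \<partial>M) = a * \<pi> * lb * real T"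
    proof -
      have "(\<integral>\<omega>. a * (\<Sum>t<T. indicator {\<omega> \<in> space M. Y t \<omega> = 0 \<and> p t \<omega> \<le> lb} \<omega>) \<partial>M)
          = a * (\<Sum>t<T. (\<integral>\<omega>. indicator {\<omega> \<in> space M. Y t \<omega> = 0 \<and> p t \<omega> \<le> lb} \<omega> \<partial>M))"
        using Zs by (simp add: Bochner_Integration.integral_sum emeasure_eq_measure)
      also have "\<dots> = a * (\<Sum>t<T. lb * \<pi>)"
        using measZ by (simp add: Int_absorb2)
      finally show ?thesis by (simp add: algebra_simps)
    qed
    finally show "(\<integral>\<omega>. weighted_regret a b Y p lam T \<omega> \<partial>M) \<ge> a * \<pi> * lb * real T" .
  qed
  have part2: "AE \<omega> in M. Liminf sequentially (\<lambda>T. ereal (weighted_regret a b Y p lam T \<omega> / real T))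
                    \<ge> ereal (a * \<pi> * lb)"
  proof -
    define Ev where "Ev t \<omega> = (of_bool (Y t \<omega> = 0) * (of_bool (p t \<omega> \<le> lb) - lb) :: real)" for t \<omega>
    define Fv where "Fv t \<omega> = (of_bool (Y t \<omega> = 0) - \<pi> :: real)" for t \<omega>
    have Ev_meas[measurable]: "Ev t \<in> borel_measurable M" for t unfolding Ev_def by measurable
    have Fv_meas[measurable]: "Fv t \<in> borel_measurable M" for t unfolding Fv_def by measurable
    have Ev_bnd: "\<bar>Ev t \<omega>\<bar> \<le> 1" for t \<omega>
      using lb01 by (auto simp: Ev_def)
    have Fv_bnd: "\<bar>Fv t \<omega>\<bar> \<le> 1" for t \<omega>
      using pi by (auto simp: Fv_def)
    have B_sets: "{\<omega> \<in> space M. Y t \<omega> = 0} \<in> sets M" for t by measurable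
    have intEA: "integrable M (\<lambda>\<omega>. Ev l \<omega> * indicator A \<omega>)" if "A \<in> sets M" for l A
    proof (rule integrable_const_bound[where B=1])
      show "AE \<omega> in M. norm (Ev l \<omega> * indicator A \<omega>) \<le> 1"
        using Ev_bnd by (auto simp: indicator_def)
    qed (use that in measurable)
    have EA: "expectation (\<lambda>\<omega>. Ev l \<omega> * indicator A \<omega>) = 0"
      if A: "A \<in> sets M" "A \<in> sets (cond_sigma M Y p lam l)" for l A
    proof -
      define B where "B = {\<omega> \<in> space M. Y l \<omega> = 0}"
      define P where "P = {\<omega> \<in> space M. p l \<omega> \<le> lb}"
      have AS: "A \<subseteq> space M" using sets.sets_into_space[OF A(1)] .
      have [measurable]: "B \<in> sets M" "P \<in> sets M" unfolding B_def P_def by measurable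
      have [measurable]: "A \<in> sets M" by (rule A(1))
      have i1: "integrable M (indicator (P \<inter> A \<inter> B) :: 'a \<Rightarrow> real)"
        "integrable M (indicator (A \<inter> B) :: 'a \<Rightarrow> real)" by (auto simp: emeasure_eq_measure)
      have eq: "Ev l \<omega> * indicator A \<omega> = indicator (P \<inter> A \<inter> B) \<omega> - lb * indicator (A \<inter> B) \<omega>" for \<omega>
      proof (cases "\<omega> \<in> A")
        case True
        then have "\<omega> \<in> space M" using AS by blast
        then show ?thesis using True by (auto simp: Ev_def indicator_def B_def P_def)
      next
        case False
        then show ?thesis by (simp add: indicator_def)
      qed
      have "expectation (\<lambda>\<omega>. Ev l \<omega> * indicator A \<omega>)
          = expectation (\<lambda>\<omega>. indicator (P \<inter> A \<inter> B) \<omega> - lb * indicator (A \<inter> B) \<omega>)"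
        unfolding eq ..
      also have "\<dots> = expectation (indicator (P \<inter> A \<inter> B)) - lb * expectation (indicator (A \<inter> B))"
        using i1 by simp
      also have "\<dots> = measure M (P \<inter> A \<inter> B) - lb * measure M (A \<inter> B)"
      proof -
        have "P \<inter> A \<inter> B \<inter> space M = P \<inter> A \<inter> B" "A \<inter> B \<inter> space M = A \<inter> B" using AS by auto
        then show ?thesis by simp
      qed
      also have "measure M (P \<inter> A \<inter> B) = lb * measure M (A \<inter> B)"
        unfolding P_def B_def by (rule p_null[OF A(2) lb01])
      finally show ?thesis by simp
    qed
    have csets: "{\<omega> \<in> space M. Y i \<omega> = 0} \<in> sets (cond_sigma M Y p lam l)"
      "{\<omega> \<in> space M. Y i \<omega> = 0 \<and> p i \<omega> \<le> lb} \<in> sets (cond_sigma M Y p lam l)" if "i < l" for i l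
    proof -
      have f1: "(\<lambda>\<omega>. real (Y i \<omega>)) \<in> {(\<lambda>\<omega>. real (Y s \<omega>)) | s. True} \<union> past_vars p lam l" by blast
      have f2: "p i \<in> {(\<lambda>\<omega>. real (Y s \<omega>)) | s. True} \<union> past_vars p lam l"
        using that unfolding past_vars_def by blast
      have s1: "(\<lambda>\<omega>. real (Y i \<omega>)) -` {0} \<inter> space M \<in> sets (cond_sigma M Y p lam l)"
        unfolding cond_sigma_def by (rule gen_sigma_basic[OF f1]) simp
      have s2: "p i -` {..lb} \<inter> space M \<in> sets (cond_sigma M Y p lam l)"
        unfolding cond_sigma_def by (rule gen_sigma_basic[OF f2]) simp
      have e1: "(\<lambda>\<omega>. real (Y i \<omega>)) -` {0} \<inter> space M = {\<omega> \<in> space M. Y i \<omega> = 0}" by auto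
      have e2: "((\<lambda>\<omega>. real (Y i \<omega>)) -` {0} \<inter> space M) \<inter> (p i -` {..lb} \<inter> space M)
          = {\<omega> \<in> space M. Y i \<omega> = 0 \<and> p i \<omega> \<le> lb}" by auto
      show "{\<omega> \<in> space M. Y i \<omega> = 0} \<in> sets (cond_sigma M Y p lam l)" using s1 e1 by simp
      show "{\<omega> \<in> space M. Y i \<omega> = 0 \<and> p i \<omega> \<le> lb} \<in> sets (cond_sigma M Y p lam l)"
        using sets.Int[OF s1 s2] e2 by simp
    qed
    have orthE: "expectation (\<lambda>\<omega>. Ev l \<omega> * Ev i \<omega>) = 0" if "i < l" for i l
    proof -
      define A1 where "A1 = {\<omega> \<in> space M. Y i \<omega> = 0 \<and> p i \<omega> \<le> lb}"
      define A2 where "A2 = {\<omega> \<in> space M. Y i \<omega> = 0}"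
      have [measurable]: "A1 \<in> sets M" "A2 \<in> sets M" unfolding A1_def A2_def by measurable
      have "expectation (\<lambda>\<omega>. Ev l \<omega> * Ev i \<omega>)
          = expectation (\<lambda>\<omega>. Ev l \<omega> * indicator A1 \<omega> - lb * (Ev l \<omega> * indicator A2 \<omega>))"
        by (rule Bochner_Integration.integral_cong) (auto simp: Ev_def A1_def A2_def indicator_def right_diff_distrib left_diff_distrib)
      also have "\<dots> = expectation (\<lambda>\<omega>. Ev l \<omega> * indicator A1 \<omega>) - lb * expectation (\<lambda>\<omega>. Ev l \<omega> * indicator A2 \<omega>)"
        using intEA by simp
      also have "\<dots> = 0"
        using EA[of A1 l] EA[of A2 l] csets[OF that] unfolding A1_def A2_def by simp
      finally show ?thesis .
    qed
    have indep2: "prob ({\<omega> \<in> space M. Y i \<omega> = 0} \<inter> {\<omega> \<in> space M. Y l \<omega> = 0}) = \<pi> * \<pi>" if "i \<noteq> l" for i l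
    proof -
      define F where "F j = sigma_sets (space M) {Y j -` A \<inter> space M |A. A \<in> sets (count_space (UNIV::nat set))}" for j
      have ind: "indep_sets F UNIV" using Y_indep unfolding indep_vars_def F_def by blast
      define A where "A j = Y j -` {0} \<inter> space M" for j
      have AF: "A \<in> Pi {i, l} F"
        unfolding A_def F_def by (auto intro!: sigma_sets.Basic)
      have all: "\<forall>J\<subseteq>UNIV. J \<noteq> {} \<longrightarrow> finite J \<longrightarrow> (\<forall>A\<in>Pi J F. prob (\<Inter>j\<in>J. A j) = (\<Prod>j\<in>J. prob (A j)))"
        using ind unfolding indep_sets_def by (rule conjunct2)
      have "prob (\<Inter>j\<in>{i, l}. A j) = (\<Prod>j\<in>{i, l}. prob (A j))"
        using all[rule_format, of "{i, l}" A] AF by simp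
      moreover have "(\<Inter>j\<in>{i, l}. A j) = {\<omega> \<in> space M. Y i \<omega> = 0} \<inter> {\<omega> \<in> space M. Y l \<omega> = 0}"
        unfolding A_def by auto
      moreover have "A j = {\<omega> \<in> space M. Y j \<omega> = 0}" for j unfolding A_def by auto
      ultimately show ?thesis using that Y_null by simp
    qed
    have orthF: "expectation (\<lambda>\<omega>. Fv l \<omega> * Fv i \<omega>) = 0" if "i < l" for i l
    proof -
      define Bl where "Bl = {\<omega> \<in> space M. Y l \<omega> = 0}"
      define Bi where "Bi = {\<omega> \<in> space M. Y i \<omega> = 0}"
      have [measurable]: "Bl \<in> sets M" "Bi \<in> sets M" unfolding Bl_def Bi_def by measurable
      have "expectation (\<lambda>\<omega>. Fv l \<omega> * Fv i \<omega>)
          = expectation (\<lambda>\<omega>. indicator (Bi \<inter> Bl) \<omega> - \<pi> * indicator Bl \<omega> - \<pi> * indicator Bi \<omega> + \<pi> * \<pi>)"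
        by (rule Bochner_Integration.integral_cong) (auto simp: Fv_def Bl_def Bi_def indicator_def algebra_simps)
      also have "\<dots> = prob (Bi \<inter> Bl) - \<pi> * prob Bl - \<pi> * prob Bi + \<pi> * \<pi>"
      proof -
        have i1: "integrable M (indicator (Bi \<inter> Bl) :: 'a \<Rightarrow> real)" "integrable M (indicator Bl :: 'a \<Rightarrow> real)"
          "integrable M (indicator Bi :: 'a \<Rightarrow> real)" by (auto simp: emeasure_eq_measure)
        have sp: "Bi \<inter> Bl \<inter> space M = Bi \<inter> Bl" "Bl \<inter> space M = Bl" "Bi \<inter> space M = Bi"
          unfolding Bl_def Bi_def by auto
        show ?thesis using i1 by (simp add: sp prob_space)
      qed
      also have "\<dots> = 0"
        using indep2[of i l] that Y_null unfolding Bl_def Bi_def by simp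
      finally show ?thesis .
    qed
    have slE: "AE \<omega> in M. (\<lambda>n. (\<Sum>t<n. Ev t \<omega>) / real n) \<longlonglongrightarrow> 0"
      by (rule orth_slln[OF Ev_meas Ev_bnd orthE])
    have slF: "AE \<omega> in M. (\<lambda>n. (\<Sum>t<n. Fv t \<omega>) / real n) \<longlonglongrightarrow> 0"
      by (rule orth_slln[OF Fv_meas Fv_bnd orthF])
    show ?thesis
      using slE slF lam_ge
    proof (eventually_elim)
      case (elim \<omega>)
      define g where "g T = a * ((\<Sum>t<T. Ev t \<omega>) / real T + lb * ((\<Sum>t<T. Fv t \<omega>) / real T) + lb * \<pi>)" for T
      have glim: "g \<longlonglongrightarrow> a * (0 + lb * 0 + lb * \<pi>)"
        unfolding g_def by (intro tendsto_intros elim(1) elim(2))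
      have gle: "g T \<le> weighted_regret a b Y p lam T \<omega> / real T" if "T \<ge> 1" for T
      proof -
        have pt: "(of_bool (Y t \<omega> = 0 \<and> p t \<omega> \<le> lb) :: real) = Ev t \<omega> + lb * Fv t \<omega> + lb * \<pi>" for t
          by (auto simp: Ev_def Fv_def algebra_simps)
        have "(\<Sum>t<T. (of_bool (Y t \<omega> = 0 \<and> p t \<omega> \<le> lb) :: real)) = (\<Sum>t<T. Ev t \<omega>) + lb * (\<Sum>t<T. Fv t \<omega>) + real T * (lb * \<pi>)"
          unfolding pt by (simp add: sum.distrib sum_distrib_left)
        then have r: "a * ((\<Sum>t<T. Ev t \<omega>) + lb * (\<Sum>t<T. Fv t \<omega>) + real T * (lb * \<pi>)) \<le> weighted_regret a b Y p lam T \<omega>"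
          using reg_ge[OF elim(3), of T] by simp
        have Tp: "real T > 0" using that by simp
        have "g T = a * ((\<Sum>t<T. Ev t \<omega>) + lb * (\<Sum>t<T. Fv t \<omega>) + real T * (lb * \<pi>)) / real T"
          unfolding g_def using Tp by (simp add: field_simps)
        then show ?thesis using r Tp by (simp add: divide_right_mono)
      qed
      have "Liminf sequentially (\<lambda>T. ereal (g T)) = ereal (a * (0 + lb * 0 + lb * \<pi>))"
        by (rule lim_imp_Liminf[OF _ tendsto_ereal[OF glim]]) simp
      moreover have "Liminf sequentially (\<lambda>T. ereal (g T)) \<le> Liminf sequentially (\<lambda>T. ereal (weighted_regret a b Y p lam T \<omega> / real T))"
      proof (rule Liminf_mono)
        show "\<forall>\<^sub>F T in sequentially. ereal (g T) \<le> ereal (weighted_regret a b Y p lam T \<omega> / real T)"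
          using eventually_ge_at_top[of "1::nat"] by eventually_elim (simp add: gle)
      qed
      ultimately show ?case by (simp add: algebra_simps)
    qed
  qed
  show ?thesis using part1 part2 by blast
qed

end
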